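(* Let $s_1\ge 1$ and $s_2\ge 0$ be integers. The maximum value over integers $N$ of $\sum_i\binom{s_1}{i}\binom{s_2}{N}\binom{s_1}{N-i}\binom{N}{i}$ occurs when $$N=\left\lfloor 2s_1+s_2+\tfrac32-\sqrt{4s_1^2+4s_1+(s_2+\tfrac12)^2}\right\rfloor+\delta$$ with $\delta\in\{0,1\}$. Consequently, in the probabilistic model described below with $s_3=s_1$, the most likely value of $|A\cup B\cup C|$ is $$\left\lceil \sqrt{4s_1^2+4s_1+(s_2+\tfrac12)^2}-\tfrac32\right\rceil-\delta.$$
   Context: Binomial coefficients $\binom{a}{b}$ are $0$ when $b<0$ or $b>a$. Probabilistic model: let $\widehat A,\widehat B,\widehat C$ be disjoint sets with $|\widehat A|=s_1$, $|\widehat B|=s_2$, $|\widehat C|=s_3$. The sample space consists of all 4-tuples $(A_1,B_1,B_2,C_2)$ with $A_1\subseteq\widehat A$, $B_1,B_2\subseteq\widehat B$, $C_2\subseteq\widehat C$, $|A_1|=|B_1|$, $|B_2|=|C_2|$ and $B_1\cap B_2=\emptyset$, each 4-tuple being equally likely. For such an outcome one sets $|A\cup B\cup C|=s_1+s_2+s_3-|B_1|-|B_2|$ (modeling sets $A,C$ with $A\cap C=\emptyset$, $|A|=s_1$, $|B|=s_2$, $|C|=s_3$). The "most likely value" is the value $v$ maximizing the probability that $|A\cup B\cup C|=v$. *)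

theory Defs
  imports Complex_Main
begin

text \<open>The summation in the corollary, as a function of an integer N
  (all binomials vanish for N < 0; for i outside 0..N the factor (N choose i) is 0).\<close>
definition cor_sum :: "nat \<Rightarrow> nat \<Rightarrow> int \<Rightarrow> nat" where
  "cor_sum s1 s2 N = (if N < 0 then 0 else
     (\<Sum>i\<le>nat N. (s1 choose i) * (s2 choose nat N) * (s1 choose (nat N - i)) * (nat N choose i)))"

definition sample_space :: "'a set \<Rightarrow> 'a set \<Rightarrow> 'a set \<Rightarrow> ('a set \<times> 'a set \<times> 'a set \<times> 'a set) set" where
  "sample_space Ah Bh Ch = {(A1, B1, B2, C2). A1 \<subseteq> Ah \<and> B1 \<subseteq> Bh \<and> B2 \<subseteq> Bh \<and> C2 \<subseteq> Ch
      \<and> card A1 = card B1 \<and> card B2 = card C2 \<and> B1 \<inter> B2 = {}}"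

definition union_size :: "'a set \<Rightarrow> 'a set \<Rightarrow> 'a set \<Rightarrow> ('a set \<times> 'a set \<times> 'a set \<times> 'a set) \<Rightarrow> int" where
  "union_size Ah Bh Ch \<omega> = (case \<omega> of (A1, B1, B2, C2) \<Rightarrow>
      int (card Ah) + int (card Bh) + int (card Ch) - int (card B1) - int (card B2))"

definition prob_union :: "'a set \<Rightarrow> 'a set \<Rightarrow> 'a set \<Rightarrow> int \<Rightarrow> real" where
  "prob_union Ah Bh Ch v =
     real (card {\<omega> \<in> sample_space Ah Bh Ch. union_size Ah Bh Ch \<omega> = v})
     / real (card (sample_space Ah Bh Ch))"

end

theory Submission
  imports Defs
begin


definition cc :: "nat \<Rightarrow> nat \<Rightarrow> real" where "cc s k = real (s choose k) / fact k"

lemma cc_rec_nat: "Suc k * (s choose Suc k) = (s - k) * (s choose k)"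
  using binomial_absorption[of k s] binomial_absorb_comp[of s k] by simp

lemma cc_rec: "(real k + 1)^2 * cc s (Suc k) = (real s - real k) * cc s k"
proof (cases "k \<le> s")
  case True
  have h: "(real k + 1) * real (s choose Suc k) = (real s - real k) * real (s choose k)"
    using cc_rec_nat[of k s] True by (metis of_nat_Suc add.commute of_nat_diff of_nat_mult)
  have "(real k + 1)^2 * cc s (Suc k) = (real k + 1) * ((real k + 1) * real (s choose Suc k)) / ((real k + 1) * fact k)"
    unfolding cc_def fact_Suc by (simp add: power2_eq_square add.commute)
  also have "\<dots> = ((real k + 1) * real (s choose Suc k)) / fact k"
    by (rule mult_divide_mult_cancel_left) simp
  also have "\<dots> = (real s - real k) * cc s k" unfolding h cc_def by simp
  finally show ?thesis .
next
  case False
  then have "s < k" "s < Suc k" by auto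
  then show ?thesis unfolding cc_def by (simp add: binomial_eq_0)
qed

lemma poly_id:
  fixes S k m X Y :: real
  assumes "k \<ge> 0" "m \<ge> 0"
  defines "N \<equiv> k + m + 1"
  defines "al \<equiv> 2*S + 1 - N" and "be \<equiv> (N+1)*(3*S+2-N)" and "bp \<equiv> 2*S+(4*S-1)*N-3*N^2"
  shows "(S - k) * X * Y * (al*(k+1) - be) / (m + 1)^2
     - k^2 * X * ((S - m) * Y / (m+1)^2) * (al * k - be) / (m + 2)^2
     = (N+1)^3 * X * ((S - m - 1) * ((S - m) * Y / (m+1)^2) / (m + 2)^2) - bp * X * ((S - m) * Y / (m+1)^2) - 2*al * X * Y"
proof -
  have "m + 1 \<noteq> 0" "m + 2 \<noteq> 0" using assms by auto
  then show ?thesis unfolding al_def be_def bp_def N_def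
    by (simp add: divide_simps) algebra
qed



lemma cc_Suc: "cc s (Suc k) = (real s - real k) * cc s k / (real k + 1)^2"
  using cc_rec[of k s] by (simp add: field_simps)
lemma cc0[simp]: "cc s 0 = 1" by (simp add: cc_def)
lemma cc1[simp]: "cc s (Suc 0) = real s" by (simp add: cc_def)
lemma cc_zero: "s < k \<Longrightarrow> cc s k = 0" by (simp add: cc_def binomial_eq_0)
lemma cc_nonneg: "cc s k \<ge> 0" by (simp add: cc_def)

definition hh :: "nat \<Rightarrow> nat \<Rightarrow> real" where "hh s N = (\<Sum>k\<le>N. cc s k * cc s (N - k))"

lemma hh_nonneg: "hh s N \<ge> 0" unfolding hh_def by (intro sum_nonneg mult_nonneg_nonneg cc_nonneg)
lemma hh0[simp]: "hh s 0 = 1" by (simp add: hh_def)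
lemma hh1: "hh s 1 = 2 * real s" by (simp add: hh_def)
lemma hh_zero: "2*s < N \<Longrightarrow> hh s N = 0"
  unfolding hh_def by (intro sum.neutral) (auto intro!: cc_zero)

lemma bound_id:
  fixes S M X :: real
  assumes "M \<ge> 0"
  defines "N \<equiv> M + 1"
  defines "al \<equiv> 2*S + 1 - N" and "be \<equiv> (N+1)*(3*S+2-N)" and "bp \<equiv> 2*S+(4*S-1)*N-3*N^2"
  shows "(M+1)^2 * X * (al * (M+1) - be) + (N+1)^3 * (X * S + (S - (M+1)) * X / (M+2)^2) - bp * X = 0"
proof -
  have "M + 2 \<noteq> 0" using assms by auto
  then show ?thesis unfolding al_def be_def bp_def N_def
    by (simp add: divide_simps) algebra
qed

lemma hh_rec:
  fixes s M :: nat
  defines "S \<equiv> real s" and "N \<equiv> real M + 1"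
  defines "al \<equiv> 2*S + 1 - N" and "be \<equiv> (N+1)*(3*S+2-N)" and "bp \<equiv> 2*S+(4*S-1)*N-3*N^2"
  shows "(N+1)^3 * hh s (Suc (Suc M)) = bp * hh s (Suc M) + 2*al * hh s M"
proof -
  define G where "G k = (real k)^2 * cc s k * cc s (M+1-k) * (al * real k - be) / (real (M+2-k))^2" for k
  define tau where "tau k = (N+1)^3 * (cc s k * cc s (M+2-k)) - bp * (cc s k * cc s (M+1-k)) - 2*al*(cc s k * cc s (M-k))" for k
  have step: "G (Suc k) - G k = tau k" if "k \<le> M" for k
  proof -
    obtain m where m: "M = k + m" using \<open>k \<le> M\<close> le_Suc_ex by blast
    have i1: "M+1-Suc k = m" "M+2-Suc k = Suc m" "M+1-k = Suc m" "M+2-k = Suc (Suc m)" "M-k = m"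
      using m by auto
    have NN: "N = real k + real m + 1" using m N_def by simp
    have g1: "G (Suc k) = (S - real k) * cc s k * cc s m * (al*(real k+1) - be) / (real m + 1)^2"
    proof -
      have "G (Suc k) = ((real k + 1)^2 * cc s (Suc k)) * cc s m * (al*(real k+1) - be) / (real m + 1)^2"
        unfolding G_def i1 by (simp add: add.commute)
      then show ?thesis unfolding cc_rec S_def .
    qed
    have g0: "G k = (real k)^2 * cc s k * ((S - real m) * cc s m / (real m+1)^2) * (al * real k - be) / (real m + 2)^2"
      unfolding G_def i1 cc_Suc[of s m] S_def by (simp add: add.commute)
    have t: "tau k = (N+1)^3 * cc s k * ((S - real m - 1) * ((S - real m) * cc s m / (real m+1)^2) / (real m + 2)^2)
        - bp * cc s k * ((S - real m) * cc s m / (real m+1)^2) - 2*al * cc s k * cc s m"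
    proof -
      have c2: "cc s (Suc (Suc m)) = (S - real m - 1) * ((S - real m) * cc s m / (real m+1)^2) / (real m + 2)^2"
        unfolding cc_Suc[of s "Suc m"] cc_Suc[of s m] S_def by (simp add: add.commute diff_diff_eq)
      show ?thesis unfolding tau_def i1 c2 cc_Suc[of s m] S_def by (simp add: mult.assoc)
    qed
    have pid: "(S - real k) * cc s k * cc s m * (al*(real k+1) - be) / (real m + 1)^2
     - (real k)^2 * cc s k * ((S - real m) * cc s m / (real m+1)^2) * (al * real k - be) / (real m + 2)^2
     = (N+1)^3 * cc s k * ((S - real m - 1) * ((S - real m) * cc s m / (real m+1)^2) / (real m + 2)^2)
        - bp * cc s k * ((S - real m) * cc s m / (real m+1)^2) - 2*al * cc s k * cc s m"
      using poly_id[of "real k" "real m" S "cc s k" "cc s m"] unfolding al_def be_def bp_def NN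
      by (simp add: mult.assoc)
    show ?thesis using pid g1 g0 t by simp
  qed
  have tel: "(\<Sum>k<Suc M. tau k) = G (Suc M)"
  proof -
    have "(\<Sum>k<Suc M. tau k) = (\<Sum>k<Suc M. G (Suc k) - G k)"
      by (rule sum.cong) (auto simp: step)
    also have "\<dots> = G (Suc M) - G 0" by (rule sum_lessThan_telescope)
    also have "G 0 = 0" by (simp add: G_def)
    finally show ?thesis by simp
  qed
  have A: "hh s (Suc (Suc M)) = (\<Sum>k<Suc M. cc s k * cc s (M+2-k)) + cc s (Suc M) * S + cc s (Suc (Suc M))"
    unfolding hh_def sum.atMost_Suc lessThan_Suc_atMost S_def by simp
  have B: "hh s (Suc M) = (\<Sum>k<Suc M. cc s k * cc s (M+1-k)) + cc s (Suc M)"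
    unfolding hh_def sum.atMost_Suc lessThan_Suc_atMost by simp
  have C: "hh s M = (\<Sum>k<Suc M. cc s k * cc s (M-k))"
    unfolding hh_def lessThan_Suc_atMost by simp
  have T: "(\<Sum>k<Suc M. tau k) = (N+1)^3 * (\<Sum>k<Suc M. cc s k * cc s (M+2-k))
      - bp * (\<Sum>k<Suc M. cc s k * cc s (M+1-k)) - 2*al*(\<Sum>k<Suc M. cc s k * cc s (M-k))"
    by (simp only: tau_def sum_subtractf sum_distrib_left)
  have GM: "G (Suc M) = (real M + 1)^2 * cc s (Suc M) * (al * (real M + 1) - be)"
    by (simp add: G_def add.commute)
  have c2: "cc s (Suc (Suc M)) = (S - (real M + 1)) * cc s (Suc M) / (real M + 2)^2"
    unfolding cc_Suc[of s "Suc M"] S_def by (simp add: add.commute)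
  have bd: "(real M+1)^2 * cc s (Suc M) * (al * (real M+1) - be) + (N+1)^3 * (cc s (Suc M) * S + (S - (real M+1)) * cc s (Suc M) / (real M+2)^2) - bp * cc s (Suc M) = 0"
    using bound_id[where M="real M" and S=S and X="cc s (Suc M)"] unfolding al_def be_def bp_def N_def by simp
  have "(N+1)^3 * hh s (Suc (Suc M)) - bp * hh s (Suc M) - 2*al * hh s M
     = (\<Sum>k<Suc M. tau k) + ((N+1)^3 * (cc s (Suc M) * S + cc s (Suc (Suc M))) - bp * cc s (Suc M))"
    unfolding A B C T by (simp add: algebra_simps)
  also have "\<dots> = 0" unfolding tel GM c2 using bd by simp
  finally show ?thesis by simp
qed



definition Pp :: "nat \<Rightarrow> nat \<Rightarrow> bool" where
  "Pp s N \<longleftrightarrow> (real N+1)^2 * hh s (Suc N) \<le> 2*(2*real s - real N)*hh s N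
     \<and> 2*(2*real s - real N)*hh s N \<le> ((real N)^2 + real N + 2*real s)*hh s (Suc N)"

definition qq :: "nat \<Rightarrow> nat \<Rightarrow> real" where
  "qq s N = 3*(real N)^2 + (5 - 4*real s)*real N + 2 - 2*real s"

lemma Pp_up:
  assumes P: "Pp s M" and q: "qq s (Suc M) \<le> 0" and lt: "Suc M < 2*s"
  shows "Pp s (Suc M)"
proof -
  define S where "S = real s"
  define N where "N = real M + 1"
  define al where "al = 2*S + 1 - N"
  define bp where "bp = 2*S+(4*S-1)*N-3*N^2"
  define x where "x = hh s M"
  define y where "y = hh s (Suc M)"
  define z where "z = hh s (Suc (Suc M))"
  have rec: "(N+1)^3 * z = bp * y + 2*al * x"
    using hh_rec[of M s] unfolding S_def N_def al_def bp_def x_def y_def z_def by simp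
  have y0: "y \<ge> 0" "x \<ge> 0" "z \<ge> 0" unfolding x_def y_def z_def by (auto intro: hh_nonneg)
  have P1: "N^2 * y \<le> 2*al*x" and P2: "2*al*x \<le> (N^2 - N + 2*S) * y"
    using P unfolding Pp_def S_def N_def al_def x_def y_def by (auto simp: algebra_simps power2_eq_square)
  have Npos: "N > 0" "N + 1 > 0" unfolding N_def by auto
  have SN: "2*S - N > 0" using lt unfolding S_def N_def by simp
  have qn: "3*N^2 + (5 - 4*S)*N + 2 - 2*S \<le> 0" using q unfolding qq_def S_def N_def by (simp add: add.commute)
  have low: "(N+1)^2 * z \<le> 2*(2*S - N)*y"
  proof -
    have "(N+1) * ((N+1)^2 * z) = bp * y + 2*al*x" using rec by (simp add: power3_eq_cube power2_eq_square algebra_simps)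
    also have "\<dots> \<le> bp * y + (N^2 - N + 2*S) * y" using P2 by simp
    also have "\<dots> = (N+1) * (2*(2*S - N)*y)" unfolding bp_def by (simp add: algebra_simps power2_eq_square)
    finally show ?thesis using Npos mult_le_cancel_left_pos by blast
  qed
  have up: "2*(2*S - N)*y \<le> (N^2 + N + 2*S) * z"
  proof -
    have K: "N^2 + N + 2*S > 0" using Npos SN by (simp add: add_pos_nonneg)
    have "(N+1)^3 * (2*(2*S - N)*y) = (2*(2*S-N)*(N+1)^3) * y" by simp
    also have "\<dots> \<le> ((N^2+N+2*S)*(bp + N^2)) * y"
    proof (rule mult_right_mono[OF _ y0(1)])
      have "(N^2+N+2*S)*(bp + N^2) - 2*(2*S-N)*(N+1)^3 = -(2*S-N)*(3*N^2 + (5 - 4*S)*N + 2 - 2*S)"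
        unfolding bp_def by (simp add: algebra_simps power2_eq_square power3_eq_cube)
      moreover have "-(2*S-N)*(3*N^2 + (5 - 4*S)*N + 2 - 2*S) \<ge> 0"
        using SN qn by (intro mult_nonpos_nonpos) auto
      ultimately show "2*(2*S-N)*(N+1)^3 \<le> (N^2+N+2*S)*(bp + N^2)" by linarith
    qed
    also have "\<dots> = (N^2+N+2*S) * (bp*y + N^2*y)" by (simp add: algebra_simps)
    also have "\<dots> \<le> (N^2+N+2*S) * ((N+1)^3 * z)"
      using P1 rec K by (intro mult_left_mono) auto
    also have "\<dots> = (N+1)^3 * ((N^2 + N + 2*S) * z)" by simp
    finally show ?thesis using Npos by simp
  qed
  show ?thesis unfolding Pp_def using low up unfolding S_def N_def y_def z_def by (simp add: add.commute)
qed

lemma Pp_down: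
  assumes P: "Pp s (Suc M)" and q: "qq s (Suc M) \<ge> 0" and lt: "Suc M < 2*s"
  shows "Pp s M"
proof -
  define S where "S = real s"
  define N where "N = real M + 1"
  define al where "al = 2*S + 1 - N"
  define bp where "bp = 2*S+(4*S-1)*N-3*N^2"
  define x where "x = hh s M"
  define y where "y = hh s (Suc M)"
  define z where "z = hh s (Suc (Suc M))"
  have rec: "(N+1)^3 * z = bp * y + 2*al * x"
    using hh_rec[of M s] unfolding S_def N_def al_def bp_def x_def y_def z_def by simp
  have y0: "y \<ge> 0" "x \<ge> 0" "z \<ge> 0" unfolding x_def y_def z_def by (auto intro: hh_nonneg)
  have Q1: "(N+1)^2 * z \<le> 2*(2*S - N)*y" and Q2: "2*(2*S - N)*y \<le> (N^2 + N + 2*S) * z"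
    using P unfolding Pp_def S_def N_def y_def z_def by (auto simp: add.commute)
  have Npos: "N > 0" "N + 1 > 0" unfolding N_def by auto
  have SN: "2*S - N > 0" using lt unfolding S_def N_def by simp
  have qn: "3*N^2 + (5 - 4*S)*N + 2 - 2*S \<ge> 0" using q unfolding qq_def S_def N_def by (simp add: add.commute)
  have K: "N^2 + N + 2*S > 0" using Npos SN by (simp add: add_pos_nonneg)
  have up: "2*al*x \<le> (N^2 - N + 2*S) * y"
  proof -
    have "(N+1)^3 * z = (N+1) * ((N+1)^2 * z)" by (simp add: power3_eq_cube power2_eq_square)
    also have "\<dots> \<le> (N+1) * (2*(2*S - N)*y)" using Q1 Npos by simp
    finally have "2*al*x \<le> (N+1) * (2*(2*S - N)*y) - bp*y" using rec by simp
    also have "\<dots> = (N^2 - N + 2*S) * y" unfolding bp_def by (simp add: algebra_simps power2_eq_square)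
    finally show ?thesis .
  qed
  have low: "N^2 * y \<le> 2*al*x"
  proof -
    have "(N^2+N+2*S) * (N^2 * y) \<le> (N^2+N+2*S) * (2*al*x)"
    proof -
      have "(N^2+N+2*S) * (N^2 * y) = ((N^2+N+2*S)*N^2) * y" by simp
      also have "\<dots> \<le> (2*(2*S-N)*(N+1)^3 - bp*(N^2+N+2*S)) * y"
      proof (rule mult_right_mono[OF _ y0(1)])
        have "(2*(2*S-N)*(N+1)^3 - bp*(N^2+N+2*S)) - (N^2+N+2*S)*N^2 = (2*S-N)*(3*N^2 + (5 - 4*S)*N + 2 - 2*S)"
          unfolding bp_def by (simp add: algebra_simps power2_eq_square power3_eq_cube)
        moreover have "(2*S-N)*(3*N^2 + (5 - 4*S)*N + 2 - 2*S) \<ge> 0" using SN qn by simp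
        ultimately show "(N^2+N+2*S)*N^2 \<le> 2*(2*S-N)*(N+1)^3 - bp*(N^2+N+2*S)" by linarith
      qed
      also have "\<dots> = (N+1)^3 * (2*(2*S-N)*y) - (N^2+N+2*S) * (bp*y)" by (simp add: algebra_simps)
      also have "\<dots> \<le> (N+1)^3 * ((N^2 + N + 2*S) * z) - (N^2+N+2*S) * (bp*y)"
        using Q2 Npos by (intro diff_right_mono mult_left_mono) auto
      also have "\<dots> = (N^2+N+2*S) * ((N+1)^3 * z - bp*y)" by (simp add: algebra_simps)
      also have "\<dots> = (N^2+N+2*S) * (2*al*x)" using rec by simp
      finally show ?thesis .
    qed
    then show ?thesis using K mult_le_cancel_left_pos by blast
  qed
  show ?thesis unfolding Pp_def using low up unfolding S_def N_def al_def x_def y_def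
    by (simp add: algebra_simps power2_eq_square)
qed

lemma Pp_base: "1 \<le> s \<Longrightarrow> Pp s 0"
  unfolding Pp_def using hh1[of s] by simp

lemma Pp_top:
  assumes "s = Suc t"
  shows "Pp s (2*t+1)"
proof -
  have z: "hh s (Suc (Suc (2*t+1))) = 0" using assms by (intro hh_zero) simp
  have r: "(real (2*t+1) + 1 + 1)^3 * hh s (Suc (Suc (2*t+1))) =
     (2*real s+(4*real s-1)*(real (2*t+1) + 1)-3*(real (2*t+1) + 1)^2) * hh s (Suc (2*t+1))
      + 2*(2*real s + 1 - (real (2*t+1) + 1)) * hh s (2*t+1)"
    using hh_rec[of "2*t+1" s] by simp
  have e: "2 * hh s (2*t+1) = 4 * (real s)^2 * hh s (Suc (2*t+1))"
    using r unfolding z using assms by (simp add: algebra_simps power2_eq_square)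
  show ?thesis unfolding Pp_def using e assms by (simp add: algebra_simps power2_eq_square)
qed

lemma qq_mono:
  assumes "qq s M > 0" "M \<le> M'"
  shows "qq s M' > 0"
proof -
  define S where "S = real s"
  define a where "a = real M"
  define b where "b = real M'"
  have q: "3*a^2 + (5-4*S)*a + 2 - 2*S > 0" using assms(1) unfolding qq_def S_def a_def by simp
  have ab: "a \<le> b" "0 \<le> a" using assms(2) unfolding a_def b_def by auto
  have "(4*a+2)*S < 3*a^2+5*a+2" using q by (simp add: algebra_simps)
  then have "4*((4*a+2)*S) < 4*(3*a^2+5*a+2)" by simp
  moreover have "(4*a+2)*(4*S) = 4*((4*a+2)*S)" by simp
  ultimately have h1: "(4*a+2)*(4*S) < 4*(3*a^2+5*a+2)" by simp
  have eq: "(4*a+2)*(6*a+5) - 4*(3*a^2+5*a+2) = 12*a^2+12*a+2" by (simp add: algebra_simps power2_eq_square)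
  have "0 \<le> 12*a^2 + 12*a + 2" using ab(2) by simp
  then have "(4*a+2)*(4*S) < (4*a+2)*(6*a+5)" using h1 eq by linarith
  then have s4: "4*S < 6*a+5" using ab by (smt (verit) mult_le_cancel_left_pos)
  have "3*b^2 + (5-4*S)*b + 2 - 2*S - (3*a^2 + (5-4*S)*a + 2 - 2*S) = (b-a)*(3*(b+a)+5-4*S)"
    by (simp add: algebra_simps power2_eq_square)
  moreover have "(b-a)*(3*(b+a)+5-4*S) \<ge> 0" using ab s4 by (intro mult_nonneg_nonneg) auto
  ultimately have "3*b^2 + (5-4*S)*b + 2 - 2*S > 0" using q by linarith
  then show ?thesis unfolding qq_def S_def b_def by simp
qed

lemma Pp_all:
  assumes s1: "1 \<le> s" and N: "N < 2*s"
  shows "Pp s N"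
proof (cases "\<exists>M. 1 \<le> M \<and> M \<le> N \<and> qq s M > 0")
  case False
  have "\<forall>n. n \<le> N \<longrightarrow> Pp s n"
  proof
    fix n show "n \<le> N \<longrightarrow> Pp s n"
    proof (induction n)
      case 0 show ?case using Pp_base s1 by simp
    next
      case (Suc n)
      show ?case
      proof
        assume "Suc n \<le> N"
        then have "Pp s n" "qq s (Suc n) \<le> 0" "Suc n < 2*s" using Suc False N by (auto simp: not_less)
        then show "Pp s (Suc n)" by (rule Pp_up)
      qed
    qed
  qed
  then show ?thesis by simp
next
  case True
  then obtain M0 where M0: "1 \<le> M0" "M0 \<le> N" "qq s M0 > 0" by blast
  obtain t where t: "s = Suc t" using s1 by (cases s) auto
  have "\<forall>d. d \<le> 2*t+1-N \<longrightarrow> Pp s (2*t+1-d)"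
  proof
    fix d show "d \<le> 2*t+1-N \<longrightarrow> Pp s (2*t+1-d)"
    proof (induction d)
      case 0 show ?case using Pp_top[OF t] by simp
    next
      case (Suc d)
      show ?case
      proof
        assume d: "Suc d \<le> 2*t+1-N"
        define n where "n = 2*t+1 - Suc d"
        have n1: "2*t+1-d = Suc n" using d n_def N t by auto
        have P: "Pp s (Suc n)" using Suc d n1 by auto
        have "M0 \<le> Suc n" using M0 d n_def by arith
        then have q: "qq s (Suc n) \<ge> 0" using qq_mono[OF M0(3), of "Suc n"] by simp
        have lt: "Suc n < 2*s" using n1 t by auto
        show "Pp s (2*t+1 - Suc d)" using Pp_down[OF P q lt] n_def by simp
      qed
    qed
  qed
  then have "Pp s (2*t+1-(2*t+1-N))" by simp
  moreover have "2*t+1-(2*t+1-N) = N" using N t by simp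
  ultimately show ?thesis by simp
qed



lemma cor_sum_real: "real (cor_sum s1 s2 (int N)) = real (s2 choose N) * fact N * hh s1 N"
proof -
  have "real (cor_sum s1 s2 (int N)) =
     (\<Sum>i\<le>N. real (s1 choose i) * real (s2 choose N) * real (s1 choose (N - i)) * real (N choose i))"
    unfolding cor_sum_def by simp
  also have "\<dots> = (\<Sum>i\<le>N. real (s2 choose N) * fact N * (cc s1 i * cc s1 (N - i)))"
  proof (rule sum.cong[OF refl])
    fix i assume "i \<in> {..N}"
    then have iN: "i \<le> N" by simp
    have b: "real (N choose i) = fact N / (fact i * fact (N - i))" using binomial_fact[OF iN] by simp
    show "real (s1 choose i) * real (s2 choose N) * real (s1 choose (N - i)) * real (N choose i) =
        real (s2 choose N) * fact N * (cc s1 i * cc s1 (N - i))"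
      unfolding b cc_def by (simp add: field_simps)
  qed
  also have "\<dots> = real (s2 choose N) * fact N * hh s1 N" unfolding hh_def by (simp add: sum_distrib_left)
  finally show ?thesis .
qed

definition ff :: "nat \<Rightarrow> nat \<Rightarrow> nat \<Rightarrow> real" where
  "ff s1 s2 N = real (cor_sum s1 s2 (int N))"

lemma ff_nonneg: "ff s1 s2 N \<ge> 0" by (simp add: ff_def)

lemma ff_eq: "ff s1 s2 N = real (s2 choose N) * fact N * hh s1 N"
  unfolding ff_def cor_sum_real ..

lemma ff_Suc:
  assumes "N \<le> s2"
  shows "ff s1 s2 (Suc N) = real (s2 choose N) * fact N * ((real s2 - real N) * hh s1 (Suc N))"
proof -
  have "real (Suc N) * real (s2 choose Suc N) = (real s2 - real N) * real (s2 choose N)"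
    using cc_rec_nat[of N s2] assms by (metis of_nat_diff of_nat_mult)
  then have "ff s1 s2 (Suc N) = (real (Suc N) * real (s2 choose Suc N)) * fact N * hh s1 (Suc N)"
    unfolding ff_eq fact_Suc by (simp add: algebra_simps)
  also have "\<dots> = real (s2 choose N) * fact N * ((real s2 - real N) * hh s1 (Suc N))"
    unfolding \<open>real (Suc N) * real (s2 choose Suc N) = (real s2 - real N) * real (s2 choose N)\<close> by simp
  finally show ?thesis .
qed

lemma ff_Suc0:
  assumes "s2 \<le> N"
  shows "ff s1 s2 (Suc N) = 0"
  unfolding ff_eq using assms by (simp add: binomial_eq_0)

context
  fixes s1 s2 :: nat
  assumes s1: "1 \<le> s1"
begin

definition "Dd = 4 * real s1 ^ 2 + 4 * real s1 + (real s2 + 1/2) ^ 2"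
definition "rr = 2 * real s1 + real s2 + 3/2 - sqrt Dd"

lemma Dd_ge: "Dd \<ge> 0" unfolding Dd_def by (intro add_nonneg_nonneg) auto
lemma Dd_sq: "(sqrt Dd)^2 = Dd" by (rule real_sqrt_pow2[OF Dd_ge])

lemma rr_lt: "rr < real s2 + 1" "rr < 2 * real s1 + 1" "rr > 0"
proof -
  have sq: "sqrt Dd ^ 2 = Dd" by (rule Dd_sq)
  have s0: "sqrt Dd \<ge> 0" by (rule real_sqrt_ge_zero[OF Dd_ge])
  have "(real s2 + 1/2)^2 < Dd" unfolding Dd_def using s1 by (simp add: add_nonneg_pos)
  then have "real s2 + 1/2 < sqrt Dd" using s0 sq by (metis power_less_imp_less_base)
  then show "rr < 2 * real s1 + 1" unfolding rr_def using s1 by simp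
  have "Dd - (2 * real s1 + 1/2)^2 = 2*real s1 + (real s2 + (real s2)^2)"
    unfolding Dd_def by (simp add: power2_eq_square algebra_simps)
  moreover have "0 < 2*real s1 + (real s2 + (real s2)^2)" using s1 by (intro add_pos_nonneg) auto
  ultimately have "(2 * real s1 + 1/2)^2 < Dd" by linarith
  then have "2 * real s1 + 1/2 < sqrt Dd" using s0 sq by (metis power_less_imp_less_base)
  then show "rr < real s2 + 1" unfolding rr_def by simp
  have "(2 * real s1 + real s2 + 3/2)^2 - Dd = 2 + (2*real s1 + (2*real s2 + 4*real s1*real s2))"
    unfolding Dd_def by (simp add: power2_eq_square algebra_simps)
  moreover have "0 < 2 + (2*real s1 + (2*real s2 + 4*real s1*real s2))" by (intro add_pos_nonneg) auto
  ultimately have "Dd < (2 * real s1 + real s2 + 3/2)^2" by linarith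
  then have "sqrt Dd < 2 * real s1 + real s2 + 3/2" using s0 sq
    by (metis power_less_imp_less_base add_nonneg_nonneg of_nat_0_le_iff mult_nonneg_nonneg zero_le_numeral divide_nonneg_nonneg zero_le_one less_eq_real_def)
  then show "rr > 0" unfolding rr_def by simp
qed

lemma ff_inc:
  assumes "real N + 1 \<le> rr"
  shows "ff s1 s2 N \<le> ff s1 s2 (Suc N)"
proof -
  define S where "S = real s1"
  define n where "n = real N"
  have Ns2: "N < s2" using assms rr_lt(1) by simp
  have Ns1: "N < 2*s1" using assms rr_lt(2) by simp
  have P: "2*(2*S - n)*hh s1 N \<le> (n^2 + n + 2*S)*hh s1 (Suc N)"
    using Pp_all[OF s1 Ns1] unfolding Pp_def S_def n_def by simp
  define Y where "Y = 2*S + real s2 + 1/2 - n"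
  have "sqrt Dd \<le> Y" using assms unfolding rr_def Y_def S_def n_def by simp
  moreover have "sqrt Dd \<ge> 0" by (rule real_sqrt_ge_zero[OF Dd_ge])
  ultimately have "(sqrt Dd)^2 \<le> Y^2" by (intro power_mono) auto
  then have DY: "Dd \<le> Y^2" unfolding Dd_sq .
  have "Y^2 - Dd = 2*(2*S-n)*(real s2 - n) - (n^2+n+2*S)"
    unfolding Y_def Dd_def S_def by (simp add: algebra_simps power2_eq_square)
  then have c: "n^2+n+2*S \<le> 2*(2*S-n)*(real s2 - n)" using DY by linarith
  have pos: "2*(2*S-n) > 0" using Ns1 unfolding S_def n_def by simp
  have "2*(2*S-n)*hh s1 N \<le> (2*(2*S-n)*(real s2 - n))*hh s1 (Suc N)"
    using P c hh_nonneg[of s1 "Suc N"] by (meson mult_right_mono order_trans)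
  then have "hh s1 N \<le> (real s2 - n) * hh s1 (Suc N)" using pos
    by (simp add: mult.assoc mult_le_cancel_left_pos)
  moreover have e: "ff s1 s2 (Suc N) = real (s2 choose N) * fact N * ((real s2 - real N) * hh s1 (Suc N))"
    using ff_Suc Ns2 by simp
  ultimately show ?thesis unfolding e ff_eq[of s1 s2 N] n_def
    by (intro mult_left_mono) auto
qed

lemma ff_dec:
  assumes "rr \<le> real N"
  shows "ff s1 s2 (Suc N) \<le> ff s1 s2 N"
proof (cases "N < s2 \<and> N < 2*s1")
  case False
  show ?thesis
  proof (cases "N < s2")
    case False then show ?thesis using ff_Suc0[of s2 N s1] ff_nonneg by simp
  next
    case True
    then have "\<not> N < 2*s1" using \<open>\<not> (N < s2 \<and> N < 2*s1)\<close> by simp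
    then have "hh s1 (Suc N) = 0" by (intro hh_zero) simp
    then show ?thesis unfolding ff_eq using ff_nonneg[of s1 s2 N] by (simp add: ff_eq)
  qed
next
  case True
  then have Ns2: "N < s2" and Ns1: "N < 2*s1" by auto
  define S where "S = real s1"
  define n where "n = real N"
  have P: "(n+1)^2 * hh s1 (Suc N) \<le> 2*(2*S - n)*hh s1 N"
    using Pp_all[OF s1 Ns1] unfolding Pp_def S_def n_def by simp
  define Z where "Z = 2*S + real s2 + 3/2 - n"
  have Z0: "Z \<ge> 0" using Ns2 unfolding Z_def S_def n_def by simp
  have "Z \<le> sqrt Dd" using assms unfolding rr_def Z_def S_def n_def by simp
  then have "Z^2 \<le> (sqrt Dd)^2" using Z0 by (intro power_mono) auto
  then have DZ: "Z^2 \<le> Dd" unfolding Dd_sq .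
  have "Z^2 - Dd = 2*(2*S-n)*(real s2 - n) - n^2 - 3*n + 2*S + 2*real s2 + 2"
    unfolding Z_def Dd_def S_def by (simp add: algebra_simps power2_eq_square)
  moreover have "n < real s2" using Ns2 n_def by simp
  ultimately have c: "2*(2*S-n)*(real s2 - n) \<le> (n+1)^2" using DZ S_def
    by (simp add: power2_eq_square algebra_simps)
  have pos: "2*(2*S-n) > 0" using Ns1 unfolding S_def n_def by simp
  have "(2*(2*S-n)) * ((real s2 - n) * hh s1 (Suc N)) \<le> (n+1)^2 * hh s1 (Suc N)"
    using c hh_nonneg[of s1 "Suc N"] by (metis mult.assoc mult_right_mono)
  also have "\<dots> \<le> (2*(2*S-n)) * hh s1 N" using P by (simp add: mult.assoc)
  finally have "(real s2 - n) * hh s1 (Suc N) \<le> hh s1 N" using pos mult_le_cancel_left_pos by blast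
  moreover have e: "ff s1 s2 (Suc N) = real (s2 choose N) * fact N * ((real s2 - real N) * hh s1 (Suc N))"
    using ff_Suc Ns2 by simp
  ultimately show ?thesis unfolding e ff_eq[of s1 s2 N] n_def
    by (intro mult_left_mono) auto
qed

lemma chain_up: "(\<And>k. a \<le> k \<Longrightarrow> k < b \<Longrightarrow> (f::nat\<Rightarrow>real) k \<le> f (Suc k)) \<Longrightarrow> a \<le> b \<Longrightarrow> f a \<le> f b"
proof (induction b)
  case 0 then show ?case by simp
next
  case (Suc b)
  show ?case
  proof (cases "a = Suc b")
    case False
    then have "a \<le> b" using Suc.prems by simp
    then have "f a \<le> f b" using Suc by simp
    also have "\<dots> \<le> f (Suc b)" using Suc.prems \<open>a \<le> b\<close> by simp
    finally show ?thesis .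
  qed simp
qed

lemma chain_down: "(\<And>k. a \<le> k \<Longrightarrow> k < b \<Longrightarrow> (f::nat\<Rightarrow>real) (Suc k) \<le> f k) \<Longrightarrow> a \<le> b \<Longrightarrow> f b \<le> f a"
proof (induction b)
  case 0 then show ?case by simp
next
  case (Suc b)
  show ?case
  proof (cases "a = Suc b")
    case False
    then have "a \<le> b" using Suc.prems by simp
    have "f (Suc b) \<le> f b" using Suc.prems \<open>a \<le> b\<close> by simp
    also have "f b \<le> f a" using Suc \<open>a \<le> b\<close> by simp
    finally show ?thesis .
  qed simp
qed

lemma main1:
  "\<exists>\<delta>\<in>{0, 1::int}. \<forall>M::int. cor_sum s1 s2 M \<le> cor_sum s1 s2 (\<lfloor>rr\<rfloor> + \<delta>)"
proof -
  define n0 where "n0 = nat \<lfloor>rr\<rfloor>"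
  have F: "\<lfloor>rr\<rfloor> = int n0" using rr_lt(3) unfolding n0_def by simp
  have n0rr: "real n0 \<le> rr \<and> rr < real n0 + 1" using F[unfolded floor_eq_iff] by simp
  then have n0r: "real n0 \<le> rr" and n0r2: "rr < real n0 + 1" by auto
  have le1: "ff s1 s2 n \<le> ff s1 s2 n0" if "n \<le> n0" for n
    using chain_up[of n n0 "ff s1 s2"] that ff_inc n0r by fastforce
  have le2: "ff s1 s2 n \<le> ff s1 s2 (Suc n0)" if "Suc n0 \<le> n" for n
  proof (rule chain_down[of "Suc n0" n "ff s1 s2"])
    fix k assume "Suc n0 \<le> k"
    then have "rr \<le> real k" using n0r2 by simp
    then show "ff s1 s2 (Suc k) \<le> ff s1 s2 k" by (rule ff_dec)
  qed (use that in auto)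
  define \<delta> :: int where "\<delta> = (if ff s1 s2 (Suc n0) \<le> ff s1 s2 n0 then 0 else 1)"
  have mx: "ff s1 s2 n \<le> real (cor_sum s1 s2 (\<lfloor>rr\<rfloor> + \<delta>))" for n
  proof (cases "ff s1 s2 (Suc n0) \<le> ff s1 s2 n0")
    case True
    then have e: "real (cor_sum s1 s2 (\<lfloor>rr\<rfloor> + \<delta>)) = ff s1 s2 n0" unfolding \<delta>_def F ff_def by simp
    show ?thesis
    proof (cases "n \<le> n0")
      case False
      then have "ff s1 s2 n \<le> ff s1 s2 (Suc n0)" using le2 by simp
      then show ?thesis using True e by simp
    qed (use le1 e in simp)
  next
    case False
    then have e: "real (cor_sum s1 s2 (\<lfloor>rr\<rfloor> + \<delta>)) = ff s1 s2 (Suc n0)" unfolding \<delta>_def F ff_def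
      by (simp add: add.commute)
    show ?thesis
    proof (cases "n \<le> n0")
      case True
      then have "ff s1 s2 n \<le> ff s1 s2 n0" using le1 by simp
      then show ?thesis using False e by simp
    qed (use le2 e in simp)
  qed
  have "\<forall>M::int. cor_sum s1 s2 M \<le> cor_sum s1 s2 (\<lfloor>rr\<rfloor> + \<delta>)"
  proof
    fix M :: int
    show "cor_sum s1 s2 M \<le> cor_sum s1 s2 (\<lfloor>rr\<rfloor> + \<delta>)"
    proof (cases "M < 0")
      case True then show ?thesis by (simp add: cor_sum_def)
    next
      case False
      then obtain n where "M = int n" by (metis nonneg_int_cases not_less)
      then show ?thesis using mx[of n] unfolding ff_def by simp
    qed
  qed
  moreover have "\<delta> \<in> {0,1}" unfolding \<delta>_def by auto
  ultimately show ?thesis by blast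
qed

end


definition subk :: "nat \<Rightarrow> 'a set \<Rightarrow> 'a set set" where "subk k X = {Y. Y \<subseteq> X \<and> card Y = k}"

lemma fin_subk: "finite X \<Longrightarrow> finite (subk k X)"
  unfolding subk_def by (rule finite_subset[of _ "Pow X"]) auto

lemma card_subk: "finite X \<Longrightarrow> card (subk k X) = card X choose k"
  unfolding subk_def by (rule n_subsets)

lemma fibre_card:
  fixes Ah Bh Ch :: "'a set" and N :: nat
  assumes fin: "finite Ah" "finite Bh" "finite Ch"
    and cards: "card Ah = s1" "card Bh = s2" "card Ch = s1"
  shows "card {\<omega> \<in> sample_space Ah Bh Ch. union_size Ah Bh Ch \<omega> = int (2*s1+s2) - int N} = cor_sum s1 s2 (int N)"
proof -
  let ?T = "SIGMA k:{..N}. SIGMA B1: subk k Bh. SIGMA B2: subk (N-k) (Bh - B1). subk k Ah \<times> subk (N-k) Ch"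
  let ?f = "\<lambda>(k::nat, B1::'a set, B2::'a set, A1::'a set, C2::'a set). (A1, B1, B2, C2)"
  have seteq: "{\<omega> \<in> sample_space Ah Bh Ch. union_size Ah Bh Ch \<omega> = int (2*s1+s2) - int N} = ?f ` ?T"
  proof (intro equalityI subsetI)
    fix \<omega> assume "\<omega> \<in> {\<omega> \<in> sample_space Ah Bh Ch. union_size Ah Bh Ch \<omega> = int (2*s1+s2) - int N}"
    then obtain A1 B1 B2 C2 where w: "\<omega> = (A1, B1, B2, C2)" and
      c: "A1 \<subseteq> Ah" "B1 \<subseteq> Bh" "B2 \<subseteq> Bh" "C2 \<subseteq> Ch" "card A1 = card B1" "card B2 = card C2" "B1 \<inter> B2 = {}"
      and u: "int s1 + int s2 + int s1 - int (card B1) - int (card B2) = int (2*s1+s2) - int N"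
      unfolding sample_space_def union_size_def using cards by auto
    have Nk: "card B1 + card B2 = N" using u by simp
    show "\<omega> \<in> ?f ` ?T"
    proof (rule image_eqI[of _ _ "(card B1, B1, B2, A1, C2)"])
      show "\<omega> = ?f (card B1, B1, B2, A1, C2)" using w by simp
      show "(card B1, B1, B2, A1, C2) \<in> ?T" using c Nk unfolding subk_def by auto
    qed
  next
    fix \<omega> assume "\<omega> \<in> ?f ` ?T"
    then obtain k B1 B2 A1 C2 where w: "\<omega> = (A1, B1, B2, C2)" and k: "k \<le> N"
      and m: "B1 \<in> subk k Bh" "B2 \<in> subk (N-k) (Bh - B1)" "A1 \<in> subk k Ah" "C2 \<in> subk (N-k) Ch"
      by auto
    then show "\<omega> \<in> {\<omega> \<in> sample_space Ah Bh Ch. union_size Ah Bh Ch \<omega> = int (2*s1+s2) - int N}"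
      unfolding sample_space_def union_size_def subk_def using cards by auto
  qed
  have inj: "inj_on ?f ?T"
    by (rule inj_onI) (auto simp: subk_def)
  have finBh: "\<And>B1. finite (Bh - B1)" using fin by simp
  have "card (?f ` ?T) = card ?T" using inj by (rule card_image)
  also have "\<dots> = (\<Sum>k\<le>N. \<Sum>B1\<in>subk k Bh. \<Sum>B2\<in>subk (N-k) (Bh - B1). card (subk k Ah) * card (subk (N-k) Ch))"
    using fin by (simp add: fin_subk finite_SigmaI card_cartesian_product)
  also have "\<dots> = (\<Sum>k\<le>N. \<Sum>B1\<in>subk k Bh. (s2 - k choose (N-k)) * ((s1 choose k) * (s1 choose (N-k))))"
  proof (intro sum.cong refl)
    fix k B1 assume "B1 \<in> subk k Bh"
    then have "B1 \<subseteq> Bh" "card B1 = k" by (auto simp: subk_def)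
    then have "card (Bh - B1) = s2 - k" using fin cards by (simp add: card_Diff_subset finite_subset)
    then show "(\<Sum>B2\<in>subk (N-k) (Bh - B1). card (subk k Ah) * card (subk (N-k) Ch)) =
       (s2 - k choose (N-k)) * ((s1 choose k) * (s1 choose (N-k)))"
      using fin cards by (simp add: card_subk)
  qed
  also have "\<dots> = (\<Sum>k\<le>N. (s2 choose k) * (s2 - k choose (N-k)) * ((s1 choose k) * (s1 choose (N-k))))"
    using fin cards by (simp add: card_subk mult.assoc)
  also have "\<dots> = (\<Sum>k\<le>N. (s1 choose k) * (s2 choose N) * (s1 choose (N - k)) * (N choose k))"
  proof (rule sum.cong[OF refl])
    fix k assume "k \<in> {..N}"
    then have kN: "k \<le> N" by simp
    have "(s2 choose N) * (N choose k) = (s2 choose k) * (s2 - k choose (N-k))"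
    proof (cases "N \<le> s2")
      case True then show ?thesis using choose_mult[OF kN True] by simp
    next
      case False
      then show ?thesis by (cases "k \<le> s2") (auto simp: binomial_eq_0)
    qed
    then show "(s2 choose k) * (s2 - k choose (N-k)) * ((s1 choose k) * (s1 choose (N-k))) =
        (s1 choose k) * (s2 choose N) * (s1 choose (N - k)) * (N choose k)"
      by (metis mult.commute mult.left_commute)
  qed
  also have "\<dots> = cor_sum s1 s2 (int N)" unfolding cor_sum_def by simp
  finally show ?thesis using seteq by simp
qed

lemma fibre_card0:
  fixes Ah Bh Ch :: "'a set"
  assumes cards: "card Ah = s1" "card Bh = s2" "card Ch = s1" and v: "v > int (2*s1+s2)"
  shows "card {\<omega> \<in> sample_space Ah Bh Ch. union_size Ah Bh Ch \<omega> = v} = 0"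
proof -
  have "{\<omega> \<in> sample_space Ah Bh Ch. union_size Ah Bh Ch \<omega> = v} = {}"
    using v cards unfolding sample_space_def union_size_def by auto
  then show ?thesis by (metis card.empty)
qed


theorem corollary1p2:
  fixes s1 s2 :: nat and Ah Bh Ch :: "'a set"
  assumes "s1 \<ge> 1"
    and "finite Ah" and "finite Bh" and "finite Ch"
    and "Ah \<inter> Bh = {}" and "Ah \<inter> Ch = {}" and "Bh \<inter> Ch = {}"
    and "card Ah = s1" and "card Bh = s2" and "card Ch = s1"
  shows "\<exists>\<delta>\<in>{0, 1::int}.
     (\<forall>M::int. cor_sum s1 s2 M \<le> cor_sum s1 s2
        (\<lfloor>2 * real s1 + real s2 + 3/2 - sqrt (4 * real s1 ^ 2 + 4 * real s1 + (real s2 + 1/2) ^ 2)\<rfloor> + \<delta>))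
   \<and> (\<forall>v::int. prob_union Ah Bh Ch v \<le> prob_union Ah Bh Ch
        (\<lceil>sqrt (4 * real s1 ^ 2 + 4 * real s1 + (real s2 + 1/2) ^ 2) - 3/2\<rceil> - \<delta>))"
proof -
  define x where "x = sqrt (4 * real s1 ^ 2 + 4 * real s1 + (real s2 + 1/2) ^ 2) - 3/2"
  have rrx: "rr s1 s2 = real (2*s1+s2) - x" unfolding rr_def[OF assms(1)] Dd_def[OF assms(1)] x_def by simp
  have fl: "\<lfloor>rr s1 s2\<rfloor> = int (2*s1+s2) - \<lceil>x\<rceil>"
  proof (rule floor_unique)
    show "real_of_int (int (2 * s1 + s2) - \<lceil>x\<rceil>) \<le> rr s1 s2" using ceiling_correct[of x] rrx by simp
    show "rr s1 s2 < real_of_int (int (2 * s1 + s2) - \<lceil>x\<rceil>) + 1" using ceiling_correct[of x] rrx by simp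
  qed
  obtain \<delta> where d: "\<delta> \<in> {0,1::int}" and m1: "\<forall>M::int. cor_sum s1 s2 M \<le> cor_sum s1 s2 (\<lfloor>rr s1 s2\<rfloor> + \<delta>)"
    using main1[OF assms(1), of s2] by blast
  define T where "T = real (card (sample_space Ah Bh Ch))"
  have pv: "prob_union Ah Bh Ch v = real (cor_sum s1 s2 (int (2*s1+s2) - v)) / T" for v
  proof (cases "v > int (2*s1+s2)")
    case True
    then show ?thesis unfolding prob_union_def T_def
      using fibre_card0[OF assms(8,9,10) True] by (simp add: cor_sum_def)
  next
    case False
    define N where "N = nat (int (2*s1+s2) - v)"
    have vN: "v = int (2*s1+s2) - int N" and vN2: "int (2*s1+s2) - v = int N" using False N_def by auto
    show ?thesis unfolding prob_union_def T_def vN2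
      using fibre_card[OF assms(2,3,4,8,9,10), of N] unfolding vN[symmetric] by simp
  qed
  have T0: "T \<ge> 0" unfolding T_def by simp
  have "\<forall>v::int. prob_union Ah Bh Ch v \<le> prob_union Ah Bh Ch (\<lceil>x\<rceil> - \<delta>)"
  proof
    fix v :: int
    have e: "int (2*s1+s2) - (\<lceil>x\<rceil> - \<delta>) = \<lfloor>rr s1 s2\<rfloor> + \<delta>" using fl by simp
    show "prob_union Ah Bh Ch v \<le> prob_union Ah Bh Ch (\<lceil>x\<rceil> - \<delta>)"
      unfolding pv e using m1 T0 by (intro divide_right_mono) auto
  qed
  then show ?thesis using d m1 unfolding x_def rr_def[OF assms(1)] Dd_def[OF assms(1)] by blast
qed

end
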